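(* Let $\alpha\neq 0$, $\beta,\gamma$ be real numbers and $\lambda$ a nonnegative integer. For all nonnegative integers $n$, $$\mathcal{E}_{n}^{(\lambda)}(\alpha,\beta,\gamma)=\sum_{k=0}^{n}S(n,k,\alpha,\beta,\gamma)\binom{k+\lambda-1}{k}k!\frac{(-\beta)^{k}}{2^{k}}$$ and $$\mathcal{E}_{n}^{(\lambda)}(\alpha,\beta,\gamma)=\sum_{k=0}^{n}S(n,k,\alpha,-\beta,\gamma-\beta\lambda)\binom{k+\lambda-1}{k}k!\frac{\beta^{k}}{2^{k}}.$$
   Context: For a number $t$ and $\alpha$, the generalised factorial is $(t|\alpha)_n=\prod_{j=0}^{n-1}(t-j\alpha)$ for $n\ge 1$ and $(t|\alpha)_0=1$. For parameters $\alpha,\beta,\gamma$, the generalised Stirling numbers $S(n,k,\alpha,\beta,\gamma)$ ($0\le k\le n$) are defined by the polynomial identity $(t|\alpha)_n=\sum_{k=0}^{n}S(n,k,\alpha,\beta,\gamma)\,(t-\gamma|\beta)_k$ in the variable $t$. For a nonnegative integer $\lambda$ put $\binom{k+\lambda-1}{k}=\lambda(\lambda+1)\cdots(\lambda+k-1)/k!$ (equal to $1$ for $k=0$). The higher order generalised Euler polynomials $\mathcal{E}_n^{(\lambda)}(\alpha,\beta,x)$ are defined by the formal power series identity $$\left[\frac{2}{(1+\alpha t)^{\beta/\alpha}+1}\right]^{\lambda}(1+\alpha t)^{x/\alpha}=\sum_{n=0}^{\infty}\mathcal{E}_{n}^{(\lambda)}(\alpha,\beta,x)\frac{t^{n}}{n!},$$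 where $(1+\alpha t)^{c}=\sum_{j\ge0}\binom{c}{j}\alpha^jt^j$. *)

theory Defs
  imports Complex_Main "HOL-Computational_Algebra.Formal_Power_Series"
begin

definition gen_fact :: "real \<Rightarrow> real \<Rightarrow> nat \<Rightarrow> real" where
  "gen_fact t a n = (\<Prod>j<n. t - real j * a)"

definition gen_stirling :: "nat \<Rightarrow> nat \<Rightarrow> real \<Rightarrow> real \<Rightarrow> real \<Rightarrow> real" where
  "gen_stirling n k a b g =
     (THE c :: nat \<Rightarrow> real. (\<forall>t. gen_fact t a n = (\<Sum>i\<le>n. c i * gen_fact (t - g) b i))
                          \<and> (\<forall>i>n. c i = 0)) k"

text \<open>Rising binomial (k+lam-1 choose k) = lam(lam+1)...(lam+k-1)/k!.\<close>
definition rbinom :: "nat \<Rightarrow> nat \<Rightarrow> real" where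
  "rbinom lam k = pochhammer (real lam) k / fact k"

text \<open>(1 + a t)^c as a formal power series: sum_j (c choose j) a^j t^j.\<close>
definition binom_fps :: "real \<Rightarrow> real \<Rightarrow> real fps" where
  "binom_fps a c = Abs_fps (\<lambda>j. (c gchoose j) * a ^ j)"

definition gen_euler :: "nat \<Rightarrow> nat \<Rightarrow> real \<Rightarrow> real \<Rightarrow> real \<Rightarrow> real" where
  "gen_euler n lam a b x =
     fact n * fps_nth ((fps_const 2 * inverse (binom_fps a (b / a) + 1)) ^ lam
                        * binom_fps a (x / a)) n"

end

theory Submission
  imports Defs "HOL-Computational_Algebra.Polynomial"
begin
unbundle fps_syntax


lemma binom_fps_mult: "binom_fps a c * binom_fps a d = binom_fps a (c + d)"
proof (rule fps_ext)
  fix n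
  have "(binom_fps a c * binom_fps a d) $ n = (\<Sum>i=0..n. (c gchoose i) * a ^ i * ((d gchoose (n - i)) * a ^ (n - i)))"
    by (simp add: binom_fps_def fps_mult_nth)
  also have "\<dots> = (\<Sum>i=0..n. (c gchoose i) * (d gchoose (n - i)) * a ^ n)"
    by (intro sum.cong refl) (simp add: power_add[symmetric])
  also have "\<dots> = (\<Sum>i=0..n. (c gchoose i) * (d gchoose (n - i))) * a ^ n"
    by (simp add: sum_distrib_right)
  also have "\<dots> = binom_fps a (c + d) $ n"
    by (simp add: binom_fps_def gbinomial_Vandermonde)
  finally show "(binom_fps a c * binom_fps a d) $ n = binom_fps a (c + d) $ n" .
qed

lemma binom_fps_0: "binom_fps a 0 = 1"
proof (rule fps_ext)
  fix n show "binom_fps a 0 $ n = 1 $ n"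
    by (cases n) (simp_all add: binom_fps_def)
qed

lemma binom_fps_nth0[simp]: "binom_fps a c $ 0 = 1"
  by (simp add: binom_fps_def)

lemma binom_fps_inverse: "inverse (binom_fps a c) = binom_fps a (- c)"
  by (rule fps_inverse_unique) (simp add: binom_fps_mult binom_fps_0)

lemma binom_fps_power: "binom_fps a c ^ m = binom_fps a (real m * c)"
  by (induction m) (simp_all add: binom_fps_0 binom_fps_mult algebra_simps)

lemma lin_mult_nth: fixes g :: "real fps" shows "((1 + fps_const a * fps_X) * g) $ n = g $ n + (if n = 0 then 0 else a * g $ (n - 1))"
proof -
  have "(1 + fps_const a * fps_X) * g = g + fps_const a * (fps_X * g)" by (simp add: algebra_simps)
  then show ?thesis by simp
qed

lemma binom_fps_deriv:
  assumes "a \<noteq> 0"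
  shows "(1 + fps_const a * fps_X) * fps_deriv (binom_fps a c) = fps_const (a * c) * binom_fps a c"
proof (rule fps_ext)
  fix n
  have key: "real (Suc m) * (c gchoose Suc m) = (c - real m) * (c gchoose m)" for m
    using gbinomial_mult_1'[of c m] gbinomial_mult_1[of c m]
    by (simp add: gbinomial_Suc_Suc algebra_simps)
  show "((1 + fps_const a * fps_X) * fps_deriv (binom_fps a c)) $ n = (fps_const (a * c) * binom_fps a c) $ n"
  proof (cases n)
    case 0
    then show ?thesis by (simp add: lin_mult_nth binom_fps_def algebra_simps)
  next
    case (Suc m)
    have "((1 + fps_const a * fps_X) * fps_deriv (binom_fps a c)) $ n
       = real (Suc n) * (c gchoose Suc n) * a ^ Suc n + a * (real n * (c gchoose n) * a ^ n)"
      using Suc by (simp add: lin_mult_nth binom_fps_def)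
    also have "\<dots> = a ^ Suc n * (c gchoose n) * c"
      by (simp only: key) (simp add: algebra_simps)
    also have "\<dots> = (fps_const (a * c) * binom_fps a c) $ n"
      by (simp add: binom_fps_def)
    finally show ?thesis .
  qed
qed



fun stir :: "real \<Rightarrow> real \<Rightarrow> real \<Rightarrow> nat \<Rightarrow> nat \<Rightarrow> real" where
  "stir a b g 0 k = (if k = 0 then 1 else 0)"
| "stir a b g (Suc n) k = (if k = 0 then 0 else stir a b g n (k - 1)) + (real k * b + g - real n * a) * stir a b g n k"

lemma stir_zero: "k > n \<Longrightarrow> stir a b g n k = 0"
  by (induction n arbitrary: k) auto

lemma gen_fact_Suc: "gen_fact t a (Suc n) = gen_fact t a n * (t - real n * a)"
  by (simp add: gen_fact_def)

lemma stir_expand: "gen_fact t a n = (\<Sum>k\<le>n. stir a b g n k * gen_fact (t - g) b k)"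
proof (induction n)
  case 0
  then show ?case by (simp add: gen_fact_def)
next
  case (Suc n)
  let ?G = "\<lambda>k. gen_fact (t - g) b k"
  let ?s = "stir a b g n"
  have lin: "?G k * (t - real n * a) = ?G (Suc k) + (real k * b + g - real n * a) * ?G k" for k
    by (simp add: gen_fact_Suc algebra_simps)
  have "gen_fact t a (Suc n) = (\<Sum>k\<le>n. ?s k * ?G k) * (t - real n * a)"
    using Suc by (simp add: gen_fact_Suc)
  also have "\<dots> = (\<Sum>k\<le>n. ?s k * (?G k * (t - real n * a)))"
    by (simp add: sum_distrib_right mult.assoc)
  also have "\<dots> = (\<Sum>k\<le>n. ?s k * ?G (Suc k) + (real k * b + g - real n * a) * ?s k * ?G k)"
    by (intro sum.cong refl, simp only: lin, simp add: algebra_simps)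
  also have "\<dots> = (\<Sum>k\<le>n. ?s k * ?G (Suc k)) + (\<Sum>k\<le>n. (real k * b + g - real n * a) * ?s k * ?G k)"
    by (rule sum.distrib)
  also have "(\<Sum>k\<le>n. ?s k * ?G (Suc k)) = (\<Sum>k\<le>Suc n. (if k = 0 then 0 else ?s (k - 1)) * ?G k)"
    by (subst sum.atMost_Suc_shift) simp
  also have "(\<Sum>k\<le>n. (real k * b + g - real n * a) * ?s k * ?G k) = (\<Sum>k\<le>Suc n. (real k * b + g - real n * a) * ?s k * ?G k)"
    by (simp add: stir_zero)
  also have "(\<Sum>k\<le>Suc n. (if k = 0 then 0 else ?s (k - 1)) * ?G k) + \<dots> = (\<Sum>k\<le>Suc n. stir a b g (Suc n) k * ?G k)"
    by (simp add: sum.distrib[symmetric] algebra_simps)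
  finally show ?case .
qed

fun ppoly :: "real \<Rightarrow> real \<Rightarrow> nat \<Rightarrow> real poly" where
  "ppoly b g 0 = 1"
| "ppoly b g (Suc i) = ppoly b g i * [:- (g + real i * b), 1:]"

lemma ppoly_props: "poly (ppoly b g i) t = gen_fact (t - g) b i \<and> degree (ppoly b g i) = i \<and> coeff (ppoly b g i) i = 1"
proof (induction i)
  case 0
  then show ?case by (simp add: gen_fact_def)
next
  case (Suc i)
  have nz: "ppoly b g i \<noteq> 0" using Suc by auto
  have "degree (ppoly b g i * [:- (g + real i * b), 1:]) = degree (ppoly b g i) + degree [:- (g + real i * b), 1:]"
    by (rule degree_mult_eq) (use nz in simp_all)
  then have d: "degree (ppoly b g (Suc i)) = Suc i"
    using Suc by simp
  let ?P = "ppoly b g i" and ?L = "[:- (g + real i * b), 1:]"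
  have eq: "degree ?P + degree ?L = Suc i" using Suc by simp
  have "coeff (?P * ?L) (degree ?P + degree ?L) = coeff ?P (degree ?P) * coeff ?L (degree ?L)"
    by (rule coeff_mult_degree_sum)
  also have "\<dots> = 1" using Suc by simp
  finally have "coeff (ppoly b g (Suc i)) (Suc i) = 1" by (simp only: eq ppoly.simps)
  then show ?case using Suc d by (simp add: gen_fact_Suc algebra_simps)
qed

lemma basis_unique:
  assumes "\<forall>t. (\<Sum>i\<le>n. e i * gen_fact (t - g) b i) = 0"
  shows "\<forall>i\<le>n. e i = 0"
  using assms
proof (induction n)
  case 0
  then show ?case by (simp add: gen_fact_def)
next
  case (Suc n)
  define p where "p = (\<Sum>i\<le>Suc n. smult (e i) (ppoly b g i))"
  have "\<forall>t. poly p t = 0" using Suc.prems by (simp add: p_def poly_sum ppoly_props del: ppoly.simps)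
  then have p0: "p = 0" using poly_all_0_iff_0 by blast
  have "coeff p (Suc n) = (\<Sum>i\<le>Suc n. e i * coeff (ppoly b g i) (Suc n))"
    by (simp add: p_def coeff_sum)
  also have "\<dots> = e (Suc n)"
  proof -
    have "(\<Sum>i\<le>Suc n. e i * coeff (ppoly b g i) (Suc n)) = (\<Sum>i\<le>n. e i * coeff (ppoly b g i) (Suc n)) + e (Suc n)"
      by (simp add: ppoly_props del: ppoly.simps)
    moreover have "coeff (ppoly b g i) (Suc n) = 0" if "i \<le> n" for i
      using that ppoly_props[of b g i] by (simp add: coeff_eq_0)
    ultimately show ?thesis by simp
  qed
  finally have eS: "e (Suc n) = 0" using p0 by simp
  have "\<forall>t. (\<Sum>i\<le>n. e i * gen_fact (t - g) b i) = 0"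
  proof
    fix t
    have "(\<Sum>i\<le>Suc n. e i * gen_fact (t - g) b i) = (\<Sum>i\<le>n. e i * gen_fact (t - g) b i) + e (Suc n) * gen_fact (t - g) b (Suc n)"
      by (rule sum.atMost_Suc)
    then show "(\<Sum>i\<le>n. e i * gen_fact (t - g) b i) = 0" using Suc.prems eS by simp
  qed
  then have "\<forall>i\<le>n. e i = 0" by (rule Suc.IH)
  then show ?case using eS le_Suc_eq by auto
qed

lemma gen_stirling_eq: "gen_stirling n k a b g = stir a b g n k"
proof -
  have "(THE c :: nat \<Rightarrow> real. (\<forall>t. gen_fact t a n = (\<Sum>i\<le>n. c i * gen_fact (t - g) b i))
                          \<and> (\<forall>i>n. c i = 0)) = stir a b g n"
  proof (rule the_equality)
    show "(\<forall>t. gen_fact t a n = (\<Sum>i\<le>n. stir a b g n i * gen_fact (t - g) b i)) \<and> (\<forall>i>n. stir a b g n i = 0)"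
      using stir_expand stir_zero by blast
  next
    fix c assume c: "(\<forall>t. gen_fact t a n = (\<Sum>i\<le>n. c i * gen_fact (t - g) b i)) \<and> (\<forall>i>n. c i = 0)"
    have "\<forall>t. (\<Sum>i\<le>n. (c i - stir a b g n i) * gen_fact (t - g) b i) = 0"
    proof
      fix t
      have "(\<Sum>i\<le>n. (c i - stir a b g n i) * gen_fact (t - g) b i) = (\<Sum>i\<le>n. c i * gen_fact (t - g) b i) - (\<Sum>i\<le>n. stir a b g n i * gen_fact (t - g) b i)"
        by (simp add: algebra_simps sum_subtractf)
      then show "(\<Sum>i\<le>n. (c i - stir a b g n i) * gen_fact (t - g) b i) = 0"
        using c stir_expand[of t a n b g] by simp
    qed
    then have "\<forall>i\<le>n. c i - stir a b g n i = 0" by (rule basis_unique)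
    then show "c = stir a b g n" using c stir_zero by (intro ext) (metis eq_iff_diff_eq_0 not_le)
  qed
  then show ?thesis by (simp add: gen_stirling_def)
qed



lemma compose_mult_nth:
  fixes a b c :: "real fps"
  assumes b0: "b $ 0 = 0"
  shows "((a oo b) * c) $ n = (\<Sum>i=0..n. a $ i * (b ^ i * c) $ n)"
proof -
  have z: "(b ^ i) $ j = 0" if "j < i" for i j
    using startsby_zero_power_prefix[OF b0] that by blast
  have "((a oo b) * c) $ n = (\<Sum>j=0..n. (\<Sum>i=0..j. a $ i * (b ^ i) $ j) * c $ (n - j))"
    by (simp add: fps_mult_nth fps_compose_nth)
  also have "\<dots> = (\<Sum>j=0..n. (\<Sum>i=0..n. a $ i * (b ^ i) $ j) * c $ (n - j))"
  proof (intro sum.cong refl)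
    fix j assume j: "j \<in> {0..n}"
    have "(\<Sum>i=0..j. a $ i * (b ^ i) $ j) = (\<Sum>i=0..n. a $ i * (b ^ i) $ j)"
      by (rule sum.mono_neutral_left) (use j z in auto)
    then show "(\<Sum>i=0..j. a $ i * (b ^ i) $ j) * c $ (n - j) = (\<Sum>i=0..n. a $ i * (b ^ i) $ j) * c $ (n - j)"
      by simp
  qed
  also have "\<dots> = (\<Sum>j=0..n. \<Sum>i=0..n. a $ i * ((b ^ i) $ j * c $ (n - j)))"
    by (simp add: sum_distrib_right mult.assoc)
  also have "\<dots> = (\<Sum>i=0..n. \<Sum>j=0..n. a $ i * ((b ^ i) $ j * c $ (n - j)))"
    by (rule sum.swap)
  also have "\<dots> = (\<Sum>i=0..n. a $ i * (b ^ i * c) $ n)"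
    by (simp add: fps_mult_nth sum_distrib_left)
  finally show ?thesis .
qed

lemma deriv_nth_lin: "((1 + fps_const a * fps_X) * fps_deriv h) $ n = real (Suc n) * h $ Suc n + a * real n * h $ n"
  by (cases n) (simp_all add: lin_mult_nth)

lemma ring_id: "(p::'a::comm_ring_1) * q * (Y ^ Suc m + Y ^ m) * G + Y ^ Suc m * (r * G) = (p * q + r) * (Y ^ Suc m * G) + p * q * (Y ^ m * G)"
  by (simp add: algebra_simps)

lemma main_stir:
  assumes a0: "\<alpha> \<noteq> 0"
  shows "fact n * (((binom_fps \<alpha> (\<beta> / \<alpha>) - 1) ^ k * binom_fps \<alpha> (\<gamma> / \<alpha>)) $ n) = fact k * \<beta> ^ k * stir \<alpha> \<beta> \<gamma> n k"
proof (induction n arbitrary: k)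
  case 0
  then show ?case by (cases k) simp_all
next
  case (Suc n)
  define Bb where "Bb = binom_fps \<alpha> (\<beta> / \<alpha>)"
  define Bg where "Bg = binom_fps \<alpha> (\<gamma> / \<alpha>)"
  define f where "f = (\<lambda>k. (Bb - 1) ^ k * Bg)"
  define L where "L = (1 + fps_const \<alpha> * fps_X :: real fps)"
  have IH: "fact n * f j $ n = fact j * \<beta> ^ j * stir \<alpha> \<beta> \<gamma> n j" for j
    using Suc.IH by (simp add: f_def Bb_def Bg_def)
  have Db: "L * fps_deriv Bb = fps_const \<beta> * Bb"
    using binom_fps_deriv[OF a0, of "\<beta> / \<alpha>"] a0 by (simp add: L_def Bb_def)
  have Dg: "L * fps_deriv Bg = fps_const \<gamma> * Bg"
    using binom_fps_deriv[OF a0, of "\<gamma> / \<alpha>"] a0 by (simp add: L_def Bg_def)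
  have D: "L * fps_deriv (f k) = fps_const (real k * \<beta> + \<gamma>) * f k + fps_const (real k * \<beta>) * f (k - 1)"
  proof (cases k)
    case 0
    then show ?thesis by (simp add: f_def Dg)
  next
    case (Suc m)
    have P: "fps_deriv ((Bb - 1) ^ k) = fps_const (real k) * fps_deriv Bb * (Bb - 1) ^ (k - 1)"
      by (simp add: fps_deriv_power)
    have "L * fps_deriv (f k) = L * (fps_deriv ((Bb - 1) ^ k) * Bg + (Bb - 1) ^ k * fps_deriv Bg)"
      by (simp add: f_def)
    also have "\<dots> = fps_const (real k) * (L * fps_deriv Bb) * (Bb - 1) ^ (k - 1) * Bg + (Bb - 1) ^ k * (L * fps_deriv Bg)"
      by (simp only: P) (simp add: algebra_simps)
    finally have "L * fps_deriv (f k) = fps_const (real k) * (L * fps_deriv Bb) * (Bb - 1) ^ m * Bg + (Bb - 1) ^ k * (L * fps_deriv Bg)"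
      using Suc by simp
    also have "\<dots> = fps_const (real k) * fps_const \<beta> * ((Bb - 1) ^ Suc m + (Bb - 1) ^ m) * Bg + (Bb - 1) ^ k * (fps_const \<gamma> * Bg)"
      by (simp add: Db Dg algebra_simps)
    also have "\<dots> = (fps_const (real k) * fps_const \<beta> + fps_const \<gamma>) * f k + fps_const (real k) * fps_const \<beta> * f (k - 1)"
      using Suc by (simp only: f_def diff_Suc_1) (rule ring_id)
    also have "\<dots> = fps_const (real k * \<beta> + \<gamma>) * f k + fps_const (real k * \<beta>) * f (k - 1)"
      by simp
    finally show ?thesis .
  qed
  have cn: "real (Suc n) * f k $ Suc n + \<alpha> * real n * f k $ n = (real k * \<beta> + \<gamma>) * f k $ n + real k * \<beta> * f (k - 1) $ n"
    using arg_cong[OF D, of "\<lambda>h. h $ n"] by (simp add: L_def deriv_nth_lin)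
  have "fact (Suc n) * f k $ Suc n = fact n * (real (Suc n) * f k $ Suc n)"
    by (simp add: algebra_simps)
  also have "\<dots> = (real k * \<beta> + \<gamma> - real n * \<alpha>) * (fact n * f k $ n) + real k * \<beta> * (fact n * f (k - 1) $ n)"
    using arg_cong[OF cn, of "\<lambda>x. fact n * x"] by (simp add: algebra_simps)
  also have "\<dots> = fact k * \<beta> ^ k * stir \<alpha> \<beta> \<gamma> (Suc n) k"
  proof (cases k)
    case 0
    then show ?thesis by (simp add: IH)
  next
    case (Suc m)
    then show ?thesis by (simp add: IH algebra_simps)
  qed
  finally show ?case by (simp add: f_def Bb_def Bg_def)
qed



lemma first_formula:
  fixes \<alpha> \<beta> \<gamma> :: real and lam n :: nat
  assumes a0: "\<alpha> \<noteq> 0"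
  shows "gen_euler n lam \<alpha> \<beta> \<gamma> =
           (\<Sum>k\<le>n. gen_stirling n k \<alpha> \<beta> \<gamma> * rbinom lam k * fact k * (- \<beta>) ^ k / 2 ^ k)"
proof -
  define Bb where "Bb = binom_fps \<alpha> (\<beta> / \<alpha>)"
  define Bg where "Bg = binom_fps \<alpha> (\<gamma> / \<alpha>)"
  define W where "W = fps_const (1/2) * (Bb - 1)"
  define G where "G = fps_binomial (- real lam)"
  have W0: "W $ 0 = 0" by (simp add: W_def Bb_def)
  have S1: "fps_const 2 * inverse (Bb + 1) = inverse (1 + W)"
  proof -
    have c: "fps_const 2 * fps_const (1/2) = (1::real fps)"
      by (simp only: fps_const_mult) simp
    have c2: "fps_const 2 = (2::real fps)" by (simp add: numeral_fps_const)
    have "fps_const 2 * (1 + W) = fps_const 2 + (fps_const 2 * fps_const (1/2)) * (Bb - 1)"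
      by (simp only: W_def distrib_left mult.assoc mult_1_right)
    also have "\<dots> = Bb + 1" by (simp only: c, simp only: c2, simp)
    finally have "Bb + 1 = fps_const 2 * (1 + W)" by simp
    then have "inverse (Bb + 1) = inverse (fps_const 2) * inverse (1 + W)"
      by (simp add: fps_inverse_mult)
    then show ?thesis by (simp add: fps_const_inverse mult.assoc[symmetric])
  qed
  have S2: "inverse (1 + W) ^ lam = G oo W"
  proof -
    have "G oo W = inverse ((1 + fps_X) ^ lam) oo W"
      by (simp add: G_def fps_binomial_minus_of_nat)
    also have "\<dots> = inverse (((1 + fps_X) ^ lam) oo W)"
      by (rule fps_inverse_compose) (simp_all add: W0)
    also have "\<dots> = inverse (((1 + fps_X) oo W) ^ lam)"
      by (simp add: fps_compose_power W0)
    also have "\<dots> = inverse ((1 + W) ^ lam)"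
      by (simp add: fps_compose_add_distrib W0)
    also have "\<dots> = inverse (1 + W) ^ lam"
      by (rule fps_inverse_power)
    finally show ?thesis by simp
  qed
  have "gen_euler n lam \<alpha> \<beta> \<gamma> = fact n * ((G oo W) * Bg) $ n"
    by (simp add: gen_euler_def S1[unfolded Bb_def] S2 Bg_def)
  also have "\<dots> = fact n * (\<Sum>i=0..n. G $ i * (W ^ i * Bg) $ n)"
    by (simp add: compose_mult_nth W0)
  also have "\<dots> = (\<Sum>i=0..n. G $ i * (1/2) ^ i * (fact n * ((Bb - 1) ^ i * Bg) $ n))"
  proof -
    have Wi: "(W ^ i * Bg) $ n = (1/2) ^ i * ((Bb - 1) ^ i * Bg) $ n" for i
      by (simp only: W_def power_mult_distrib fps_const_power mult.assoc fps_mult_left_const_nth)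
    show ?thesis by (simp only: sum_distrib_left Wi) (simp add: mult_ac)
  qed
  also have "\<dots> = (\<Sum>k\<le>n. gen_stirling n k \<alpha> \<beta> \<gamma> * rbinom lam k * fact k * (- \<beta>) ^ k / 2 ^ k)"
  proof (subst atLeast0AtMost, intro sum.cong refl)
    fix k
    have Gk: "G $ k = (-1) ^ k * rbinom lam k"
      by (simp add: G_def gbinomial_pochhammer rbinom_def)
    show "G $ k * (1/2) ^ k * (fact n * ((Bb - 1) ^ k * Bg) $ n) = gen_stirling n k \<alpha> \<beta> \<gamma> * rbinom lam k * fact k * (- \<beta>) ^ k / 2 ^ k"
      using main_stir[OF a0, of n \<beta> k \<gamma>]
      by (simp add: Gk Bb_def Bg_def gen_stirling_eq power_minus' power_divide algebra_simps)
  qed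
  finally show ?thesis .
qed

lemma euler_reflect:
  fixes \<alpha> \<beta> \<gamma> :: real and lam n :: nat
  assumes a0: "\<alpha> \<noteq> 0"
  shows "gen_euler n lam \<alpha> \<beta> \<gamma> = gen_euler n lam \<alpha> (- \<beta>) (\<gamma> - \<beta> * real lam)"
proof -
  define Bb where "Bb = binom_fps \<alpha> (\<beta> / \<alpha>)"
  define Bm where "Bm = binom_fps \<alpha> (- \<beta> / \<alpha>)"
  have BB: "Bb * Bm = 1"
    by (simp add: Bb_def Bm_def binom_fps_mult binom_fps_0)
  have "Bb + 1 = Bb * (Bm + 1)" using BB by (simp add: algebra_simps)
  then have "inverse (Bb + 1) = inverse Bb * inverse (Bm + 1)"
    by (simp add: fps_inverse_mult)
  also have "inverse Bb = Bm" using BB by (rule fps_inverse_unique)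
  finally have I: "inverse (Bb + 1) = Bm * inverse (Bm + 1)" .
  have P: "Bm ^ lam * binom_fps \<alpha> (\<gamma> / \<alpha>) = binom_fps \<alpha> ((\<gamma> - \<beta> * real lam) / \<alpha>)"
  proof -
    have "Bm ^ lam * binom_fps \<alpha> (\<gamma> / \<alpha>) = binom_fps \<alpha> (real lam * (- \<beta> / \<alpha>) + \<gamma> / \<alpha>)"
      by (simp add: Bm_def binom_fps_power binom_fps_mult)
    also have "real lam * (- \<beta> / \<alpha>) + \<gamma> / \<alpha> = (\<gamma> - \<beta> * real lam) / \<alpha>"
      by (simp add: diff_divide_distrib)
    finally show ?thesis .
  qed
  have "(fps_const 2 * inverse (Bb + 1)) ^ lam * binom_fps \<alpha> (\<gamma> / \<alpha>)
      = (fps_const 2 * inverse (Bm + 1)) ^ lam * (Bm ^ lam * binom_fps \<alpha> (\<gamma> / \<alpha>))"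
    by (simp add: I power_mult_distrib mult_ac)
  also have "\<dots> = (fps_const 2 * inverse (Bm + 1)) ^ lam * binom_fps \<alpha> ((\<gamma> - \<beta> * real lam) / \<alpha>)"
    by (simp only: P)
  finally show ?thesis by (simp add: gen_euler_def Bb_def Bm_def)
qed

theorem mainTheorem11:
  fixes \<alpha> \<beta> \<gamma> :: real and lam n :: nat
  assumes "\<alpha> \<noteq> 0"
  shows "gen_euler n lam \<alpha> \<beta> \<gamma> =
           (\<Sum>k\<le>n. gen_stirling n k \<alpha> \<beta> \<gamma> * rbinom lam k * fact k * (- \<beta>) ^ k / 2 ^ k)
       \<and> gen_euler n lam \<alpha> \<beta> \<gamma> =
           (\<Sum>k\<le>n. gen_stirling n k \<alpha> (- \<beta>) (\<gamma> - \<beta> * real lam) * rbinom lam k * fact k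
                    * \<beta> ^ k / 2 ^ k)"
proof
  show "gen_euler n lam \<alpha> \<beta> \<gamma> =
           (\<Sum>k\<le>n. gen_stirling n k \<alpha> \<beta> \<gamma> * rbinom lam k * fact k * (- \<beta>) ^ k / 2 ^ k)"
    by (rule first_formula[OF assms])
  show "gen_euler n lam \<alpha> \<beta> \<gamma> =
           (\<Sum>k\<le>n. gen_stirling n k \<alpha> (- \<beta>) (\<gamma> - \<beta> * real lam) * rbinom lam k * fact k
                    * \<beta> ^ k / 2 ^ k)"
    using euler_reflect[OF assms, of n lam \<beta> \<gamma>] first_formula[OF assms, of n lam "- \<beta>" "\<gamma> - \<beta> * real lam"]
    by simp
qed

end
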